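(* For the quasi-random router for any transition matrix $P$, $$\left|I_{v,u}[z,z')-(z'-z)P_{v,u}\right|\le 2\lg(z'-z+1)$$ for all $v,u\in V$ and all $z,z'\in\mathbb{Z}_{\ge0}$ with $z'>z$.
   Context: $V=\{1,\dots,N\}$, $P$ a stochastic $N\times N$ matrix, $\mathcal N(v)=\{u:P_{v,u}>0\}$, $\delta(v)=|\mathcal N(v)|$; $\lg=\log_2$. The van der Corput function $\psi:\mathbb{Z}_{\ge0}\to[0,1)$ is $\psi(0)=0$ and, for $i>0$ written in binary as $i=\sum_{j=0}^{\lfloor\lg i\rfloor}\beta_j(i)2^j$ with $\beta_j(i)\in\{0,1\}$, $\psi(i)=\sum_{j=0}^{\lfloor\lg i\rfloor}\beta_j(i)2^{-(j+1)}$. The quasi-random router: fix an ordering $u_1,\dots,u_{\delta(v)}$ of $\mathcal N(v)$ and set $\sigma_v(i)=u_k$ where $k$ is such that $\sum_{j=1}^{k-1}P_{v,u_j}\le\psi(i)<\sum_{j=1}^{k}P_{v,u_j}$. $I_{v,u}[z,z')=|\{j\in\{z,\dots,z'-1\}:\sigma_v(j)=u\}|$. *)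

theory Defs
  imports "HOL-Analysis.Analysis"
begin

definition stochastic :: "nat \<Rightarrow> (nat \<Rightarrow> nat \<Rightarrow> real) \<Rightarrow> bool" where
  "stochastic N P \<longleftrightarrow> (\<forall>v\<in>{1..N}. \<forall>u\<in>{1..N}. P v u \<ge> 0) \<and>
                       (\<forall>v\<in>{1..N}. (\<Sum>u\<in>{1..N}. P v u) = 1)"

definition nbrs :: "nat \<Rightarrow> (nat \<Rightarrow> nat \<Rightarrow> real) \<Rightarrow> nat \<Rightarrow> nat set" where
  "nbrs N P v = {u\<in>{1..N}. P v u > 0}"

text \<open>van der Corput function: psi 0 = 0, and for i > 0,
  psi i = sum over j = 0..floor(lg i) of beta_j(i) 2^(-(j+1)), beta_j(i) the j-th binary digit.\<close>
definition vdc :: "nat \<Rightarrow> real" where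
  "vdc i = (if i = 0 then 0 else
     (\<Sum>j\<in>{0..nat \<lfloor>log 2 (real i)\<rfloor>}. real ((i div 2 ^ j) mod 2) / 2 ^ (j + 1)))"

text \<open>Quasi-random router at v, given an ordering us = [u_1,...,u_delta] of N(v):
  sigma_v(i) = u_k where sum_{j<k} P v u_j <= psi(i) < sum_{j<=k} P v u_j.\<close>
definition qr_router :: "(nat \<Rightarrow> nat \<Rightarrow> real) \<Rightarrow> nat \<Rightarrow> nat list \<Rightarrow> nat \<Rightarrow> nat" where
  "qr_router P v us i = us ! ((THE k. k \<in> {1..length us} \<and>
       (\<Sum>j=1..k-1. P v (us ! (j-1))) \<le> vdc i \<and>
       vdc i < (\<Sum>j=1..k. P v (us ! (j-1)))) - 1)"

text \<open>I_{v,u}[z,z') for a router sigma (sigma v i = vertex chosen at the i-th visit of v).\<close>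
definition Icount :: "(nat \<Rightarrow> nat \<Rightarrow> nat) \<Rightarrow> nat \<Rightarrow> nat \<Rightarrow> nat \<Rightarrow> nat \<Rightarrow> nat" where
  "Icount \<sigma> v u z z' = card {j\<in>{z..<z'}. \<sigma> v j = u}"

end

theory Submission
  imports Defs
begin


definition vdcK :: "nat \<Rightarrow> nat \<Rightarrow> real" where
  "vdcK K i = (\<Sum>j<K. real ((i div 2 ^ j) mod 2) / 2 ^ (j + 1))"

lemma vdcK_ext: "i < 2 ^ M \<Longrightarrow> M \<le> K \<Longrightarrow> vdcK K i = vdcK M i"
proof (induction K)
  case 0 then show ?case by simp
next
  case (Suc K)
  show ?case
  proof (cases "M = Suc K")
    case False
    then have "M \<le> K" using Suc by simp
    moreover have "i div 2 ^ K = 0"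
    proof -
      have "(2::nat) ^ M \<le> 2 ^ K" using \<open>M \<le> K\<close> by (intro power_increasing) simp_all
      then have "i < 2 ^ K" using Suc.prems by linarith
      then show ?thesis by (simp add: div_less)
    qed
    ultimately show ?thesis using Suc by (simp add: vdcK_def)
  qed simp
qed

lemma vdc_eq_vdcK: "i < 2 ^ K \<Longrightarrow> vdc i = vdcK K i"
proof (cases "i = 0")
  case True then show ?thesis by (simp add: vdc_def vdcK_def)
next
  case False
  assume iK: "i < 2 ^ K"
  define L where "L = nat \<lfloor>log 2 (real i)\<rfloor>"
  have fl: "\<lfloor>log 2 (real i)\<rfloor> = int L"
  proof -
    have "log 2 (real i) \<ge> 0" using False by simp
    then show ?thesis unfolding L_def by simp
  qed
  have "(2::nat) ^ L \<le> i \<and> i < 2 ^ (L + 1)"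
    using floor_log_nat_eq_powr_iff[of 2 i L] False fl by simp
  then have iL: "i < 2 ^ Suc L" by simp
  have "Suc L \<le> K"
  proof (rule ccontr)
    assume "\<not> Suc L \<le> K"
    then have "(2::nat) ^ K \<le> 2 ^ L" by (intro power_increasing) simp_all
    then show False using \<open>2 ^ L \<le> i \<and> _\<close> iK by linarith
  qed
  have "vdc i = vdcK (Suc L) i"
    using False unfolding vdc_def vdcK_def L_def
    by (simp add: atLeast0AtMost lessThan_Suc_atMost)
  also have "\<dots> = vdcK K i" using vdcK_ext[OF iL \<open>Suc L \<le> K\<close>] by simp
  finally show ?thesis .
qed

lemma vdcK_even: "vdcK (Suc K) (2 * m) = vdcK K m / 2"
  unfolding vdcK_def sum.lessThan_Suc_shift
  by (simp add: sum_divide_distrib div_mult2_eq)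

lemma vdcK_odd: "vdcK (Suc K) (2 * m + 1) = 1/2 + vdcK K m / 2"
  unfolding vdcK_def sum.lessThan_Suc_shift
  by (simp add: sum_divide_distrib div_mult2_eq)

lemma vdc_even: "vdc (2 * m) = vdc m / 2"
proof -
  have "m < 2 ^ m" by simp
  then show ?thesis using vdc_eq_vdcK[of m m] vdc_eq_vdcK[of "2*m" "Suc m"] vdcK_even by simp
qed

lemma vdc_odd: "vdc (2 * m + 1) = 1/2 + vdc m / 2"
proof -
  have "m < 2 ^ m" by simp
  then have "2*m+1 < 2 ^ Suc m" by (simp only: power_Suc)
  then have "vdc (2*m+1) = vdcK (Suc m) (2*m+1)" by (rule vdc_eq_vdcK)
  also have "\<dots> = 1/2 + vdcK m m / 2" by (rule vdcK_odd)
  also have "\<dots> = 1/2 + vdc m / 2" using vdc_eq_vdcK[of m m] \<open>m < 2^m\<close> by simp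
  finally show ?thesis .
qed

lemma vdc_bounds: "0 \<le> vdc m \<and> vdc m < 1"
proof (induction m rule: less_induct)
  case (less m)
  show ?case
  proof (cases "m = 0")
    case True then show ?thesis by (simp add: vdc_def)
  next
    case False
    then have lt: "m div 2 < m" by simp
    have "m = 2 * (m div 2) \<or> m = 2 * (m div 2) + 1" by presburger
    then show ?thesis
    proof
      assume h: "m = 2 * (m div 2)"
      have "vdc m = vdc (2*(m div 2))" by (rule arg_cong[OF h])
      then show ?thesis using less[OF lt] vdc_even[of "m div 2"] by simp
    next
      assume h: "m = 2 * (m div 2) + 1"
      have "vdc m = vdc (2*(m div 2)+1)" by (rule arg_cong[OF h])
      then show ?thesis using less[OF lt] vdc_odd[of "m div 2"] by simp
    qed
  qed
qed


definition B :: "nat \<Rightarrow> real" where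
  "B m = (if m = 0 then 0 else if m = 1 then 1 else log 2 (real m - 1) / 2 + 3/2)"

lemma B_mono: "m \<le> n \<Longrightarrow> B m \<le> B n"
proof -
  assume mn: "m \<le> n"
  consider "m = 0" | "m = 1" | "m \<ge> 2" by linarith
  then show ?thesis
  proof cases
    case 1
    then show ?thesis unfolding B_def by auto
  next
    case 2
    show ?thesis
    proof (cases "n = 1")
      case False
      then have "n \<ge> 2" using 2 mn by simp
      then have "log 2 (real n - 1) \<ge> 0" by simp
      then show ?thesis unfolding B_def using 2 mn by auto
    qed (simp add: 2)
  next
    case 3
    then have "log 2 (real m - 1) \<le> log 2 (real n - 1)" using mn by simp
    then show ?thesis unfolding B_def using 3 mn by auto
  qed
qed

lemma B_step: "n \<ge> 2 \<Longrightarrow> B ((n+1) div 2) + 1/2 \<le> B n"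
proof -
  assume n2: "n \<ge> 2"
  define k where "k = (n+1) div 2"
  have k1: "k \<ge> 1" using n2 unfolding k_def by simp
  show ?thesis
  proof (cases "k = 1")
    case True
    then have "n = 2" using n2 unfolding k_def by presburger
    then show ?thesis using True unfolding B_def k_def by simp
  next
    case False
    then have k2: "k \<ge> 2" using k1 by simp
    have "2 * k \<le> n + 1" unfolding k_def by simp
    then have "real (2 * k) \<le> real (n + 1)" by (rule of_nat_mono)
    then have le: "2 * (real k - 1) \<le> real n - 1" by simp
    have "log 2 (2 * (real k - 1)) = 1 + log 2 (real k - 1)"
      using k2 by (subst log_mult) auto
    moreover have "log 2 (2 * (real k - 1)) \<le> log 2 (real n - 1)"
      using le k2 by (subst log_le_cancel_iff) auto
    ultimately show ?thesis using k2 n2 False unfolding B_def k_def[symmetric] by auto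
  qed
qed

lemma B_log: "B n \<le> log 2 (real n + 1)"
proof -
  consider "n = 0" | "n = 1" | "n \<ge> 2" by linarith
  then show ?thesis
  proof cases
    case 3
    have "8 * (real n - 1) \<le> (real n + 1)^2"
    proof -
      have "(real n + 1)^2 - 8 * (real n - 1) = (real n - 3)^2"
        by (simp add: power2_eq_square algebra_simps)
      moreover have "(real n - 3)^2 \<ge> 0" by simp
      ultimately show ?thesis by linarith
    qed
    then have "log 2 (8 * (real n - 1)) \<le> log 2 ((real n + 1)^2)"
      using 3 by (subst log_le_cancel_iff) auto
    moreover have "log 2 (8 * (real n - 1)) = 3 + log 2 (real n - 1)"
    proof -
      have "log 2 (8 * (real n - 1)) = log 2 8 + log 2 (real n - 1)"
        using 3 by (subst log_mult) auto
      moreover have "log 2 (8::real) = 3"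
        using log_pow_cancel[of "2::real" 3] by simp
      ultimately show ?thesis by simp
    qed
    moreover have "log 2 ((real n + 1)^2) = 2 * log 2 (real n + 1)"
      by (subst log_nat_power) auto
    ultimately show ?thesis using 3 unfolding B_def by auto
  qed (auto simp: B_def)
qed



lemma sum_split_parity:
  fixes f :: "nat \<Rightarrow> real"
  shows "(\<Sum>j\<in>{z..<z+n}. f j) = (\<Sum>m\<in>{(z+1) div 2..<(z+n+1) div 2}. f (2*m))
           + (\<Sum>m\<in>{z div 2..<(z+n) div 2}. f (2*m+1))"
proof (induction n)
  case 0 then show ?case by simp
next
  case (Suc n)
  have s1: "(\<Sum>j\<in>{z..<z+Suc n}. f j) = (\<Sum>j\<in>{z..<z+n}. f j) + f (z+n)" by simp
  show ?case
  proof (cases "even (z+n)")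
    case True
    then obtain k where k: "z + n = 2*k" by blast
    have a2: "(z+n+1) div 2 = k" using k by simp
    have a1: "(z+Suc n+1) div 2 = Suc ((z+n+1) div 2)" 
    proof -
      have "z + Suc n + 1 = 2 * Suc k" using k by simp
      then show ?thesis using a2 by simp
    qed
    have a3: "(z + Suc n) div 2 = (z+n) div 2" using k by simp
    have le: "(z+1) div 2 \<le> (z+n+1) div 2" by (intro div_le_mono) simp
    have "(\<Sum>m\<in>{(z+1) div 2..<(z+Suc n+1) div 2}. f (2*m))
        = (\<Sum>m\<in>{(z+1) div 2..<(z+n+1) div 2}. f (2*m)) + f (z+n)"
      unfolding a1 sum.atLeastLessThan_Suc[OF le] using a2 k by simp
    then show ?thesis unfolding s1 Suc a3 by simp
  next
    case False
    then obtain k where k: "z + n = 2*k+1" by (metis oddE)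
    have a1: "(z+Suc n+1) div 2 = (z+n+1) div 2" using k by simp
    have a2: "(z+n) div 2 = k" using k by simp
    have a3: "(z + Suc n) div 2 = Suc ((z+n) div 2)" using k a2 by simp
    have le: "z div 2 \<le> (z+n) div 2" by (intro div_le_mono) simp
    have "(\<Sum>m\<in>{z div 2..<(z+Suc n) div 2}. f (2*m+1))
        = (\<Sum>m\<in>{z div 2..<(z+n) div 2}. f (2*m+1)) + f (z+n)"
      unfolding a3 sum.atLeastLessThan_Suc[OF le] using a2 k by simp
    then show ?thesis unfolding s1 Suc a1 by simp
  qed
qed


lemma div_facts:
  fixes z n :: nat
  defines "ne \<equiv> (z+n+1) div 2 - (z+1) div 2" and "no \<equiv> (z+n) div 2 - z div 2"
  shows "ne + no = n \<and> ne \<le> no + 1 \<and> no \<le> ne + 1 \<and> ne \<le> (n+1) div 2 \<and> no \<le> (n+1) div 2"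
proof -
  obtain a where a: "z = 2*a \<or> z = 2*a+1" by (metis evenE oddE)
  obtain b where b: "n = 2*b \<or> n = 2*b+1" by (metis evenE oddE)
  from a b show ?thesis
  proof (elim disjE)
    assume "z = 2*a" "n = 2*b"
    then show ?thesis by (simp add: ne_def no_def)
  next
    assume "z = 2*a" "n = 2*b+1"
    then show ?thesis by (simp add: ne_def no_def)
  next
    assume "z = 2*a+1" "n = 2*b"
    then show ?thesis by (simp add: ne_def no_def)
  next
    assume "z = 2*a+1" "n = 2*b+1"
    then show ?thesis by (simp add: ne_def no_def)
  qed
qed

lemma small_term: "\<bar>a\<bar> \<le> 1 \<Longrightarrow> 0 \<le> y \<Longrightarrow> y \<le> 1/2 \<Longrightarrow> \<bar>(a::real) * y\<bar> \<le> 1/2"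
proof -
  assume h: "\<bar>a\<bar> \<le> 1" "0 \<le> y" "y \<le> 1/2"
  have "\<bar>a * y\<bar> = \<bar>a\<bar> * y" using h by (simp add: abs_mult)
  also have "\<dots> \<le> 1 * (1/2)" using h by (intro mult_mono) auto
  finally show ?thesis by simp
qed

lemma disc:
  "0 \<le> x \<Longrightarrow> x \<le> 1 \<Longrightarrow>
   \<bar>(\<Sum>j\<in>{z..<z+n}. if vdc j < x then 1 else 0::real) - real n * x\<bar> \<le> B n"
proof (induction n arbitrary: z x rule: less_induct)
  case (less n)
  consider "n = 0" | "n = 1" | "n \<ge> 2" by linarith
  then show ?case
  proof cases
    case 1 then show ?thesis by (simp add: B_def)
  next
    case 2 then show ?thesis using less.prems by (simp add: B_def)
  next
    case 3
    define g where "g = (\<lambda>j. if vdc j < x then 1 else 0::real)"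
    define ze where "ze = (z+1) div 2"
    define ne where "ne = (z+n+1) div 2 - ze"
    define zo where "zo = z div 2"
    define no where "no = (z+n) div 2 - zo"
    have e1: "(z+n+1) div 2 = ze + ne" unfolding ne_def ze_def
      using div_le_mono[of "z+1" "z+n+1" 2] by simp
    have e2: "(z+n) div 2 = zo + no" unfolding no_def zo_def
      using div_le_mono[of "z" "z+n" 2] by simp
    have hn: "ne + no = n" and hd1: "ne \<le> no + 1" and hd2: "no \<le> ne + 1"
      and hb1: "ne \<le> (n+1) div 2" and hb2: "no \<le> (n+1) div 2"
      using div_facts[of z n] unfolding ne_def no_def ze_def zo_def by auto
    have lt1: "ne < n" using hb1 3 by linarith
    have lt2: "no < n" using hb2 3 by linarith
    have ad: "\<bar>real ne - real no\<bar> \<le> 1" using hd1 hd2 by linarith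
    have rn: "real n = real ne + real no" using hn by linarith
    have split: "(\<Sum>j\<in>{z..<z+n}. g j) = (\<Sum>m\<in>{ze..<ze+ne}. g (2*m))
           + (\<Sum>m\<in>{zo..<zo+no}. g (2*m+1))"
      using sum_split_parity[of g z n] unfolding e1 e2 ze_def zo_def .
    have Bfin: "B ne + 1/2 \<le> B n" "B no + 1/2 \<le> B n"
      using B_mono[OF hb1] B_mono[OF hb2] B_step[OF 3] by linarith+
    show ?thesis
    proof (cases "x \<le> 1/2")
      case True
      have ge: "\<And>m. g (2*m) = (if vdc m < 2*x then 1 else 0)"
        unfolding g_def vdc_even by auto
      have go: "g (2*m+1) = 0" for m
      proof -
        have "0 \<le> vdc m" using vdc_bounds by blast
        then show ?thesis unfolding g_def vdc_odd using True by simp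
      qed
      define Se where "Se = (\<Sum>m\<in>{ze..<ze+ne}. if vdc m < 2*x then 1 else 0::real)"
      have IH: "\<bar>Se - real ne * (2*x)\<bar> \<le> B ne"
        unfolding Se_def using less.IH[OF lt1, of "2*x" ze] less.prems True by simp
      have eq: "(\<Sum>j\<in>{z..<z+n}. g j) - real n * x
          = (Se - real ne * (2*x)) + (real ne - real no) * x"
        unfolding split ge go Se_def rn by (simp add: algebra_simps)
      have "\<bar>(real ne - real no) * x\<bar> \<le> 1/2"
        using small_term[OF ad] less.prems True by simp
      then show ?thesis using eq IH Bfin unfolding g_def by linarith
    next
      case False
      have ge: "g (2*m) = 1" for m
      proof -
        have "vdc m < 1" using vdc_bounds by blast
        then show ?thesis unfolding g_def vdc_even using False by simp
      qed
      have go: "\<And>m. g (2*m+1) = (if vdc m < 2*x-1 then 1 else 0)"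
        unfolding g_def vdc_odd by auto
      define So where "So = (\<Sum>m\<in>{zo..<zo+no}. if vdc m < 2*x-1 then 1 else 0::real)"
      have IH: "\<bar>So - real no * (2*x-1)\<bar> \<le> B no"
        unfolding So_def using less.IH[OF lt2, of "2*x-1" zo] less.prems False by simp
      have eq: "(\<Sum>j\<in>{z..<z+n}. g j) - real n * x
          = (So - real no * (2*x-1)) + (real ne - real no) * (1-x)"
        unfolding split ge go So_def rn by (simp add: algebra_simps)
      have "\<bar>(real ne - real no) * (1-x)\<bar> \<le> 1/2"
        using small_term[OF ad] less.prems False by simp
      then show ?thesis using eq IH Bfin unfolding g_def by linarith
    qed
  qed
qed



lemma card_sum_real:
  fixes z z' :: nat
  shows "real (card {j\<in>{z..<z'}. Q j}) = (\<Sum>j\<in>{z..<z'}. if Q j then 1 else 0::real)"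
proof -
  have "real (card {j\<in>{z..<z'}. Q j}) = (\<Sum>j\<in>{j\<in>{z..<z'}. Q j}. 1::real)" by simp
  also have "\<dots> = (\<Sum>j\<in>{z..<z'}. if Q j then 1 else 0::real)"
    by (rule sum.inter_filter) simp
  finally show ?thesis .
qed

lemma S1_eq: "(\<Sum>j=1..k. f (us ! (j-1))) = (\<Sum>j<k. (f (us ! j)::real))"
  by (induction k) (auto simp: lessThan_Suc)

lemma router_facts:
  fixes us :: "nat list" and P :: "nat \<Rightarrow> nat \<Rightarrow> real" and v :: nat and t :: real
  defines "T \<equiv> (\<lambda>k. \<Sum>j<k. P v (us ! j))"
  assumes pos: "\<And>j. j < length us \<Longrightarrow> P v (us ! j) > 0"
    and tot: "T (length us) = 1"
    and t0: "0 \<le> t" and t1: "t < 1"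
  defines "K \<equiv> (THE k. k \<in> {1..length us} \<and> T (k-1) \<le> t \<and> t < T k)"
  shows "K \<in> {1..length us}"
    and "\<And>k0. k0 \<in> {1..length us} \<Longrightarrow> K = k0 \<longleftrightarrow> (T (k0-1) \<le> t \<and> t < T k0)"
proof -
  let ?L = "length us"
  have mono: "T i \<le> T j" if "i \<le> j" "j \<le> ?L" for i j
  proof -
    have "T j = T i + (\<Sum>l\<in>{i..<j}. P v (us ! l))"
      unfolding T_def using that
      by (metis atLeast0LessThan le0 sum.atLeastLessThan_concat)
    moreover have "(\<Sum>l\<in>{i..<j}. P v (us ! l)) \<ge> 0"
      using pos that by (intro sum_nonneg) (simp add: less_imp_le)
    ultimately show ?thesis by simp
  qed
  define Q where "Q = (\<lambda>k. k \<in> {1..?L} \<and> T (k-1) \<le> t \<and> t < T k)"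
  have uniq: "k1 = k2" if "Q k1" "Q k2" for k1 k2
  proof (rule ccontr)
    assume ne: "k1 \<noteq> k2"
    have gen: False if "Q a" "Q b" "a < b" for a b
    proof -
      have "a \<le> b - 1" "b - 1 \<le> ?L" using that unfolding Q_def by auto
      then have "T a \<le> T (b-1)" by (rule mono)
      then show False using that unfolding Q_def by auto
    qed
    show False using ne gen[OF that] gen[OF that(2) that(1)] by linarith
  qed
  have ex: "\<exists>k. Q k"
  proof -
    define k where "k = (LEAST k. t < T k)"
    have tL: "t < T ?L" using tot t1 by simp
    have tk: "t < T k" unfolding k_def by (rule LeastI[of _ ?L]) (rule tL)
    have kL: "k \<le> ?L" unfolding k_def by (rule Least_le) (rule tL)
    have k0: "k \<noteq> 0"
    proof
      assume "k = 0"
      then show False using tk t0 unfolding T_def by simp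
    qed
    have "\<not> t < T (k-1)" unfolding k_def by (rule not_less_Least) (use k0 k_def in simp)
    then show ?thesis using tk kL k0 unfolding Q_def by (intro exI[of _ k]) auto
  qed
  have QK: "Q K"
    unfolding K_def Q_def[symmetric] using ex uniq by (metis theI)
  then show "K \<in> {1..?L}" unfolding Q_def by simp
  show "K = k0 \<longleftrightarrow> (T (k0-1) \<le> t \<and> t < T k0)" if "k0 \<in> {1..?L}" for k0
    using QK uniq that unfolding Q_def by blast
qed



lemma T_mono:
  fixes P :: "nat \<Rightarrow> nat \<Rightarrow> real"
  assumes pos: "\<And>j. j < length us \<Longrightarrow> P v (us ! j) > 0"
    and "i \<le> j" "j \<le> length us"
  shows "(\<Sum>l<i. P v (us ! l)) \<le> (\<Sum>l<j. P v (us ! l))"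
proof -
  have "(\<Sum>l<j. P v (us ! l)) = (\<Sum>l<i. P v (us ! l)) + (\<Sum>l\<in>{i..<j}. P v (us ! l))"
    using assms(2) by (metis atLeast0LessThan le0 sum.atLeastLessThan_concat)
  moreover have "(\<Sum>l\<in>{i..<j}. P v (us ! l)) \<ge> 0"
    using pos assms by (intro sum_nonneg) (simp add: less_imp_le)
  ultimately show ?thesis by simp
qed

theorem lemma5p5:
  fixes N :: nat and P :: "nat \<Rightarrow> nat \<Rightarrow> real" and ord :: "nat \<Rightarrow> nat list"
  assumes "stochastic N P"
    and "\<And>v. v \<in> {1..N} \<Longrightarrow> distinct (ord v) \<and> set (ord v) = nbrs N P v"
    and "v \<in> {1..N}" and "u \<in> {1..N}" and "z' > z"
  shows "\<bar>real (Icount (\<lambda>w i. qr_router P w (ord w) i) v u z z') - real (z' - z) * P v u\<bar>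
           \<le> 2 * log 2 (real (z' - z + 1))"
proof -
  define us where "us = ord v"
  define L where "L = length us"
  define n where "n = z' - z"
  have z': "z' = z + n" unfolding n_def using assms(5) by simp
  define T where "T = (\<lambda>k. \<Sum>j<k. P v (us ! j))"
  have dist: "distinct us" and setus: "set us = nbrs N P v"
    using assms(2)[OF assms(3)] unfolding us_def by auto
  have nonneg: "\<And>w. w \<in> {1..N} \<Longrightarrow> P v w \<ge> 0" and sum1: "(\<Sum>w\<in>{1..N}. P v w) = 1"
    using assms(1,3) unfolding stochastic_def by auto
  have pos: "\<And>j. j < length us \<Longrightarrow> P v (us ! j) > 0"
  proof -
    fix j assume "j < length us"
    then have "us ! j \<in> nbrs N P v" using setus nth_mem by metis
    then show "P v (us ! j) > 0" unfolding nbrs_def by simp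
  qed
  have tot: "T L = 1"
  proof -
    have "T L = sum_list (map (P v) us)"
      unfolding T_def L_def sum_list_sum_nth by (simp add: atLeast0LessThan)
    also have "\<dots> = sum (P v) (set us)" using dist by (rule sum_list_distinct_conv_sum_set)
    also have "\<dots> = sum (P v) {1..N}"
    proof (rule sum.mono_neutral_left)
      show "set us \<subseteq> {1..N}" using setus unfolding nbrs_def by auto
      show "\<forall>i\<in>{1..N} - set us. P v i = 0"
        using setus nonneg unfolding nbrs_def by force
    qed simp
    finally show ?thesis using sum1 by simp
  qed
  define K where "K = (\<lambda>i. THE k. k \<in> {1..L} \<and> T (k-1) \<le> vdc i \<and> vdc i < T k)"
  have qr: "qr_router P v us i = us ! (K i - 1)" for i
    unfolding qr_router_def K_def T_def L_def S1_eq[of "P v"] ..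
  have KL: "K i \<in> {1..L}" for i
    using router_facts(1)[of us P v "vdc i", OF pos] tot vdc_bounds[of i]
    unfolding K_def T_def L_def by blast
  have Kiff: "K i = k0 \<longleftrightarrow> (T (k0-1) \<le> vdc i \<and> vdc i < T k0)" if "k0 \<in> {1..L}" for i k0
    using router_facts(2)[of us P v "vdc i", OF pos _ _ _ that[unfolded L_def]] tot vdc_bounds[of i]
    unfolding K_def T_def L_def by blast
  have Ic: "Icount (\<lambda>w i. qr_router P w (ord w) i) v u z z' = card {j\<in>{z..<z'}. us ! (K j - 1) = u}"
    unfolding Icount_def us_def[symmetric] qr by simp
  have lognn: "0 \<le> log 2 (real (z' - z + 1))" by simp
  show ?thesis
  proof (cases "u \<in> set us")
    case False
    then have "P v u = 0" using setus nonneg[OF assms(4)] assms(4) unfolding nbrs_def by auto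
    moreover have e: "{j\<in>{z..<z'}. us ! (K j - 1) = u} = {}"
    proof -
      have "us ! (K j - 1) \<in> set us" for j using KL[of j] unfolding L_def by auto
      then show ?thesis using False by auto
    qed
    ultimately have "real (Icount (\<lambda>w i. qr_router P w (ord w) i) v u z z') - real (z' - z) * P v u = 0"
      unfolding Ic e by simp
    then show ?thesis using lognn by simp
  next
    case True
    then obtain i0 where i0: "i0 < L" "us ! i0 = u" unfolding L_def by (metis in_set_conv_nth)
    define a where "a = T i0"
    define b where "b = T (Suc i0)"
    have ba: "b - a = P v u" unfolding a_def b_def T_def using i0 by simp
    have a0: "0 \<le> a" unfolding a_def T_def using pos i0 L_def
      by (intro sum_nonneg) (simp add: less_imp_le)
    have "P v u > 0" using pos i0 unfolding L_def by auto
    then have ab: "a \<le> b" using ba by linarith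
    have b1: "b \<le> 1" unfolding b_def using tot T_mono[of us P v "Suc i0" L, OF pos] i0
      unfolding T_def L_def by simp
    have cond: "us ! (K j - 1) = u \<longleftrightarrow> (a \<le> vdc j \<and> vdc j < b)" for j
    proof -
      have "us ! (K j - 1) = u \<longleftrightarrow> K j - 1 = i0"
        using i0 KL[of j] dist nth_eq_iff_index_eq unfolding L_def by fastforce
      also have "\<dots> \<longleftrightarrow> K j = Suc i0" using KL[of j] by auto
      also have "\<dots> \<longleftrightarrow> (a \<le> vdc j \<and> vdc j < b)"
        using Kiff[of "Suc i0" j] i0 unfolding a_def b_def by simp
      finally show ?thesis .
    qed
    have "real (card {j\<in>{z..<z'}. us ! (K j - 1) = u})
        = (\<Sum>j\<in>{z..<z'}. if a \<le> vdc j \<and> vdc j < b then 1 else 0::real)"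
      unfolding cond by (rule card_sum_real)
    also have "\<dots> = (\<Sum>j\<in>{z..<z+n}. if vdc j < b then 1 else 0::real)
                  - (\<Sum>j\<in>{z..<z+n}. if vdc j < a then 1 else 0::real)"
      unfolding z' sum_subtractf[symmetric] using ab by (intro sum.cong) auto
    finally have eqc: "real (Icount (\<lambda>w i. qr_router P w (ord w) i) v u z z')
        = (\<Sum>j\<in>{z..<z+n}. if vdc j < b then 1 else 0::real)
                  - (\<Sum>j\<in>{z..<z+n}. if vdc j < a then 1 else 0::real)" using Ic by simp
    have d1: "\<bar>(\<Sum>j\<in>{z..<z+n}. if vdc j < b then 1 else 0::real) - real n * b\<bar> \<le> B n"
      using disc[of b z n] a0 ab b1 by simp
    have d2: "\<bar>(\<Sum>j\<in>{z..<z+n}. if vdc j < a then 1 else 0::real) - real n * a\<bar> \<le> B n"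
      using disc[of a z n] a0 ab b1 by simp
    have "real n * P v u = real n * b - real n * a" using ba by (simp add: algebra_simps)
    moreover have "B n \<le> log 2 (real (z' - z + 1))" using B_log[of n] unfolding n_def by (simp add: add.commute)
    ultimately show ?thesis using eqc d1 d2 unfolding n_def[symmetric] by linarith
  qed
qed

end
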